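(* Let $c_0,\tau_0>0$ and let the thermo-viscous attenuation coefficient be $$\alpha^*_{tv}(\omega)=\frac{-i\omega}{c_0\sqrt{1-i\tau_0\omega}}+\frac{i\omega}{c_0},\qquad\omega\in\mathbb{R}.$$ Then the kernel $K(\vec x,t)=\frac{1}{\sqrt{2\pi}}\mathcal{F}^{-1}\{e^{-\alpha^*_{tv}(\cdot)|\vec x|}\}(t)$ violates causality.
   Context: Fourier convention: $\mathcal{F}^{-1}\{\hat f\}(t)=\frac{1}{\sqrt{2\pi}}\int_{\mathbb{R}}e^{-i\omega t}\hat f(\omega)\,d\omega$ (tempered distributions). The square root of a complex number is the root with non-negative real part. $K$ is causal if $t\mapsto K(\vec x,t)$ vanishes for $t<0$ for every $\vec x\in\mathbb{R}^3$. *)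

theory Defs
  imports "HOL-Analysis.Analysis"
begin

definition alpha_tv :: "real \<Rightarrow> real \<Rightarrow> real \<Rightarrow> complex" where
  "alpha_tv c0 tau \<omega> =
     - \<i> * of_real \<omega> / (of_real c0 * csqrt (1 - \<i> * of_real tau * of_real \<omega>))
     + \<i> * of_real \<omega> / of_real c0"

definition inv_fourier :: "(real \<Rightarrow> complex) \<Rightarrow> real \<Rightarrow> complex" where
  "inv_fourier g t =
     complex_of_real (1 / sqrt (2 * pi)) *
       (LINT \<omega>|lborel. exp (- \<i> * of_real \<omega> * of_real t) * g \<omega>)"

definition kernel_tv :: "real \<Rightarrow> real \<Rightarrow> real^3 \<Rightarrow> real \<Rightarrow> complex" where
  "kernel_tv c0 tau x t =
     complex_of_real (1 / sqrt (2 * pi)) *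
       inv_fourier (\<lambda>\<omega>. exp (- alpha_tv c0 tau \<omega> * of_real (norm x))) t"

definition causal :: "(real^3 \<Rightarrow> real \<Rightarrow> complex) \<Rightarrow> bool" where
  "causal K \<longleftrightarrow> (\<forall>x t. t < 0 \<longrightarrow> K x t = 0)"

end

theory Submission
  imports Defs "HOL-Probability.Sinc_Integral"
begin

lemma antideriv_lin_exp:
  fixes c A B :: complex and x :: real
  assumes "c \<noteq> 0"
  shows "((\<lambda>s::real. exp (c * of_real s) * ((A + B * of_real s) / c - B / c^2))
          has_vector_derivative ((A + B * of_real x) * exp (c * of_real x))) (at x within X)"
proof -
  have "((\<lambda>z. exp (c * z) * ((A + B * z) / c - B / c^2)) has_field_derivative
        ((A + B * of_real x) * exp (c * of_real x))) (at (of_real x))"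
    using assms
    by (auto intro!: derivative_eq_intros simp: field_simps power2_eq_square)
  then show ?thesis
    by (intro has_vector_derivative_within_subset[OF has_vector_derivative_real_field]) auto
qed

lemma antideriv_lin:
  fixes A B :: complex and x :: real
  shows "((\<lambda>s::real. A * of_real s + B * of_real s ^ 2 / 2)
          has_vector_derivative (A + B * of_real x)) (at x within X)"
proof -
  have "((\<lambda>z. A * z + B * z^2/2) has_field_derivative (A + B * of_real x)) (at (of_real x))"
    by (auto intro!: derivative_eq_intros simp: field_simps power2_eq_square)
  then show ?thesis
    by (intro has_vector_derivative_within_subset[OF has_vector_derivative_real_field]) auto
qed

lemma hi_cong: "(g has_integral i) S \<Longrightarrow> (\<And>x. x \<in> S \<Longrightarrow> f x = g x) \<Longrightarrow> (f has_integral i) S"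
  using has_integral_cong by metis

definition tri :: "real \<Rightarrow> real \<Rightarrow> real" where "tri w s = max 0 (1 - \<bar>s\<bar> / w)"
definition Phi :: "real \<Rightarrow> real \<Rightarrow> real" where
  "Phi w \<omega> = (if \<omega> = 0 then w else 2 * (1 - cos (\<omega> * w)) / (w * \<omega>\<^sup>2))"

lemma FT_tri_Icc:
  assumes w: "w > 0"
  shows "((\<lambda>s. complex_of_real (tri w s) * exp (- \<i> * of_real \<omega> * of_real s)) has_integral
          complex_of_real (Phi w \<omega>)) {-w..w}"
proof -
  define c where "c = - \<i> * of_real \<omega>"
  have e1: "complex_of_real (tri w s) * exp (- \<i> * of_real \<omega> * of_real s) =
        (1 + of_real (1/w) * of_real s) * exp (c * of_real s)" if "s \<in> {-w..0}" for s
    using that w by (auto simp: tri_def c_def max_def field_simps)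
  have e2: "complex_of_real (tri w s) * exp (- \<i> * of_real \<omega> * of_real s) =
        (1 + of_real (-1/w) * of_real s) * exp (c * of_real s)" if "s \<in> {0..w}" for s
    using that w by (auto simp: tri_def c_def max_def field_simps)
  show ?thesis
  proof (cases "\<omega> = 0")
    case True
    let ?F1 = "\<lambda>s::real. 1 * of_real s + of_real (1/w) * of_real s ^ 2 / 2 :: complex"
    let ?F2 = "\<lambda>s::real. 1 * of_real s + of_real (-1/w) * of_real s ^ 2 / 2 :: complex"
    have "((\<lambda>s. (1 + of_real (1/w) * of_real s) * exp (c * of_real s)) has_integral (?F1 0 - ?F1 (-w))) {-w..0}"
      using w True unfolding c_def
      apply (intro fundamental_theorem_of_calculus)
       apply simp
      apply (rule has_vector_derivative_eq_rhs[OF antideriv_lin])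
      apply simp
      done
    then have i1: "((\<lambda>s. complex_of_real (tri w s) * exp (- \<i> * of_real \<omega> * of_real s)) has_integral (?F1 0 - ?F1 (-w))) {-w..0}"
      by (rule hi_cong[OF _ e1])
    have "((\<lambda>s. (1 + of_real (-1/w) * of_real s) * exp (c * of_real s)) has_integral (?F2 w - ?F2 0)) {0..w}"
      using w True unfolding c_def
      apply (intro fundamental_theorem_of_calculus)
       apply simp
      apply (rule has_vector_derivative_eq_rhs[OF antideriv_lin])
      apply simp
      done
    then have i2: "((\<lambda>s. complex_of_real (tri w s) * exp (- \<i> * of_real \<omega> * of_real s)) has_integral (?F2 w - ?F2 0)) {0..w}"
      by (rule hi_cong[OF _ e2])
    have "(?F1 0 - ?F1 (-w)) + (?F2 w - ?F2 0) = complex_of_real (Phi w \<omega>)"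
      using w True by (simp add: Phi_def field_simps power2_eq_square)
    then show ?thesis using has_integral_combine[OF _ _ i1 i2] w by simp
  next
    case False
    then have c0: "c \<noteq> 0" by (simp add: c_def)
    let ?F1 = "\<lambda>s::real. exp (c * of_real s) * ((1 + of_real (1/w) * of_real s) / c - of_real (1/w) / c^2)"
    let ?F2 = "\<lambda>s::real. exp (c * of_real s) * ((1 + of_real (-1/w) * of_real s) / c - of_real (-1/w) / c^2)"
    have "((\<lambda>s. (1 + of_real (1/w) * of_real s) * exp (c * of_real s)) has_integral (?F1 0 - ?F1 (-w))) {-w..0}"
      using w c0
      apply (intro fundamental_theorem_of_calculus)
       apply simp
      apply (rule antideriv_lin_exp)
      apply simp
      done
    then have i1: "((\<lambda>s. complex_of_real (tri w s) * exp (- \<i> * of_real \<omega> * of_real s)) has_integral (?F1 0 - ?F1 (-w))) {-w..0}"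
      by (rule hi_cong[OF _ e1])
    have "((\<lambda>s. (1 + of_real (-1/w) * of_real s) * exp (c * of_real s)) has_integral (?F2 w - ?F2 0)) {0..w}"
      using w c0
      apply (intro fundamental_theorem_of_calculus)
       apply simp
      apply (rule antideriv_lin_exp)
      apply simp
      done
    then have i2: "((\<lambda>s. complex_of_real (tri w s) * exp (- \<i> * of_real \<omega> * of_real s)) has_integral (?F2 w - ?F2 0)) {0..w}"
      by (rule hi_cong[OF _ e2])
    have cosx: "exp (c * of_real w) + exp (- (c * of_real w)) = 2 * complex_of_real (cos (\<omega> * w))"
      using cos_exp_eq[of "complex_of_real (\<omega> * w)"] by (simp add: c_def cos_of_real[symmetric] field_simps)
    have c2: "c^2 = - complex_of_real (\<omega>^2)" by (simp add: c_def power_mult_distrib)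
    define E where "E = exp (c * of_real w)"
    define E' where "E' = exp (- (c * of_real w))"
    have wc: "complex_of_real w \<noteq> 0" using w by simp
    have "?F1 0 = 1/c - 1/(of_real w * c^2)" by simp
    moreover have "?F1 (-w) = - E' / (of_real w * c^2)"
      using wc by (simp add: E'_def field_simps)
    moreover have "?F2 w = E / (of_real w * c^2)"
      using wc by (simp add: E_def field_simps)
    moreover have "?F2 0 = 1/c + 1/(of_real w * c^2)" by simp
    ultimately have "(?F1 0 - ?F1 (-w)) + (?F2 w - ?F2 0) = (E + E' - 2) / (of_real w * c^2)"
      using wc c0 by (simp add: field_simps)
    also have "\<dots> = complex_of_real (Phi w \<omega>)"
      using False w cosx unfolding E_def E'_def c2 Phi_def
      by (simp add: field_simps)
    finally show ?thesis using has_integral_combine[OF _ _ i1 i2] w by simp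
  qed
qed


lemma FT_tri:
  assumes w: "w > 0"
  shows "(\<integral>s. complex_of_real (tri w s) * exp (- \<i> * of_real \<omega> * of_real s) \<partial>lborel)
          = complex_of_real (Phi w \<omega>)"
proof -
  define G where "G s = complex_of_real (tri w s) * exp (- \<i> * of_real \<omega> * of_real s)" for s
  have Gm: "G \<in> borel_measurable borel" unfolding G_def tri_def by measurable
  have intG: "integrable lborel G"
  proof (rule Bochner_Integration.integrable_bound[where f="indicator {-w..w} :: real \<Rightarrow> real"])
    show "integrable lborel (indicator {-w..w} :: real \<Rightarrow> real)" by (intro integrable_real_indicator) (use w in auto)
    show "G \<in> borel_measurable lborel" using Gm by (simp add: measurable_lborel1)
    show "AE x in lborel. norm (G x) \<le> norm (indicator {-w..w} x :: real)"
      using w by (intro AE_I2) (auto simp: G_def tri_def norm_mult indicator_def)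
  qed
  have "(G has_integral complex_of_real (Phi w \<omega>)) UNIV"
    by (rule has_integral_on_superset[OF FT_tri_Icc[OF w, of \<omega>, folded G_def]])
       (use w in \<open>auto simp: G_def tri_def max_def field_simps\<close>)
  then show ?thesis
    using has_integral_integral_lborel[OF intG] has_integral_unique unfolding G_def by blast
qed

lemma tri_int: assumes w: "w > 0" shows "integrable lborel (tri w)"
proof (rule Bochner_Integration.integrable_bound[where f="indicator {-w..w} :: real \<Rightarrow> real"])
  show "integrable lborel (indicator {-w..w} :: real \<Rightarrow> real)" by (intro integrable_real_indicator) (use w in auto)
  show "tri w \<in> borel_measurable lborel" unfolding tri_def by measurable
  show "AE x in lborel. norm (tri w x) \<le> norm (indicator {-w..w} x :: real)"
    using w by (intro AE_I2) (auto simp: tri_def indicator_def max_def field_simps)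
qed

lemma tri_nonneg: "tri w s \<ge> 0" by (simp add: tri_def)

definition sq :: "real \<Rightarrow> real \<Rightarrow> complex" where
  "sq tau \<omega> = csqrt (1 - \<i> * of_real tau * of_real \<omega>)"
definition ff :: "real \<Rightarrow> real \<Rightarrow> real \<Rightarrow> real \<Rightarrow> complex" where
  "ff c0 tau d \<omega> = exp (\<i> * of_real \<omega> * of_real d / (of_real c0 * sq tau \<omega>))"

lemma alg:
  assumes "c0 \<noteq> 0"
  shows "exp (- alpha_tv c0 tau \<omega> * of_real d) =
         ff c0 tau d \<omega> * exp (- \<i> * of_real \<omega> * of_real (d / c0))"
proof -
  have z0: "1 - \<i> * of_real tau * of_real \<omega> \<noteq> 0"
    by (auto simp: complex_eq_iff)
  then have s0: "csqrt (1 - \<i> * of_real tau * of_real \<omega>) \<noteq> 0" by simp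
  have "- alpha_tv c0 tau \<omega> * of_real d = \<i> * of_real \<omega> * of_real d / (of_real c0 * sq tau \<omega>)
        + (- \<i> * of_real \<omega> * of_real (d / c0))"
    using assms s0 by (simp add: alpha_tv_def sq_def field_simps)
  then show ?thesis unfolding ff_def exp_add[symmetric] by simp
qed

lemma Im_sq: "Im (w\<^sup>2) = 2 * Re w * Im w" by (simp add: power2_eq_square)

lemma sq_facts:
  fixes tau \<omega> :: real
  defines "z \<equiv> 1 - \<i> * of_real tau * of_real \<omega>"
  shows "cmod z \<ge> 1" "(cmod z)\<^sup>2 = 1 + tau\<^sup>2 * \<omega>\<^sup>2"
    "(Re (csqrt z))\<^sup>2 = (cmod z + 1) / 2" "(Im (csqrt z))\<^sup>2 = (cmod z - 1) / 2"
    "2 * Re (csqrt z) * Im (csqrt z) = - tau * \<omega>" "Re (csqrt z) \<ge> 0"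
proof -
  have Rz: "Re z = 1" and Iz: "Im z = - tau * \<omega>" by (simp_all add: z_def)
  show r1: "cmod z \<ge> 1" using abs_Re_le_cmod[of z] Rz by simp
  show "(cmod z)\<^sup>2 = 1 + tau\<^sup>2 * \<omega>\<^sup>2" using cmod_power2[of z] Rz Iz by (simp add: power_mult_distrib)
  show "(Re (csqrt z))\<^sup>2 = (cmod z + 1) / 2" using Rz r1 by simp
  have sg: "(if Im z = 0 then 1 else sgn (Im z))\<^sup>2 = (1::real)"
    by (auto simp: sgn_if)
  show "(Im (csqrt z))\<^sup>2 = (cmod z - 1) / 2" using Rz r1
    by (simp add: power_mult_distrib sg)
  have "2 * Re (csqrt z) * Im (csqrt z) = Im ((csqrt z)\<^sup>2)" by (rule Im_sq[symmetric])
  also have "\<dots> = Im z" by (simp only: power2_csqrt)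
  finally show "2 * Re (csqrt z) * Im (csqrt z) = - tau * \<omega>" using Iz by simp
  show "Re (csqrt z) \<ge> 0" by (rule Re_csqrt)
qed

lemma ff_norm:
  fixes \<omega> :: real
  assumes c0: "c0 > 0" and tau: "tau > 0"
  defines "r \<equiv> cmod (1 - \<i> * of_real tau * of_real \<omega>)"
  defines "a \<equiv> Re (sq tau \<omega>)"
  shows "norm (ff c0 tau d \<omega>) = exp (- ((d / (c0 * tau)) * a * (1 - 1 / r)))"
proof -
  define b where "b = Im (sq tau \<omega>)"
  note F = sq_facts[of tau \<omega>, folded sq_def r_def, folded a_def b_def]
  have r0: "r > 0" using F(1) by simp
  have ab: "a\<^sup>2 + b\<^sup>2 = r" using F(3,4) by simp
  have "Re (\<i> * of_real \<omega> * of_real d / (of_real c0 * sq tau \<omega>)) =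
        (\<omega> * d * (c0 * b)) / ((c0 * a)\<^sup>2 + (c0 * b)\<^sup>2)"
    by (simp add: Re_divide a_def b_def)
  also have "\<dots> = (\<omega> * b) * d / (c0 * r)"
  proof -
    have den: "(c0 * a)\<^sup>2 + (c0 * b)\<^sup>2 = c0\<^sup>2 * r"
      unfolding ab[symmetric] by (simp add: power_mult_distrib algebra_simps)
    show ?thesis unfolding den using c0 by (simp add: field_simps power2_eq_square)
  qed
  also have "\<omega> * b = - a * (r - 1) / tau"
  proof -
    have "tau * (\<omega> * b) = - (2 * a * b) * b" using F(5) by (simp add: algebra_simps)
    also have "\<dots> = - a * (2 * b\<^sup>2)" by (simp add: power2_eq_square algebra_simps)
    also have "\<dots> = - a * (r - 1)" using F(4) by simp
    finally show ?thesis using tau by (simp add: field_simps)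
  qed
  also have "- a * (r - 1) / tau * d / (c0 * r) = - ((d / (c0 * tau)) * a * (1 - 1 / r))"
    using r0 c0 tau by (simp add: field_simps)
  finally show ?thesis by (simp add: ff_def)
qed

lemma ff_le1:
  assumes "c0 > 0" "tau > 0" "d \<ge> 0"
  shows "norm (ff c0 tau d \<omega>) \<le> 1"
proof -
  note F = sq_facts[of tau \<omega>, folded sq_def]
  have "0 \<le> (d / (c0 * tau)) * Re (sq tau \<omega>) * (1 - 1 / cmod (1 - \<i> * of_real tau * of_real \<omega>))"
    using assms F(1,6) by (intro mult_nonneg_nonneg) (auto simp: field_simps)
  then show ?thesis using ff_norm[OF assms(1,2)] by simp
qed

lemma ff_decay:
  assumes "c0 > 0" "tau > 0" "d > 0"
  obtains C where "\<And>\<omega>. norm (ff c0 tau d \<omega>) \<le> C / (1 + \<omega>\<^sup>2)"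
proof -
  define k where "k = d / (c0 * tau)"
  have k: "k > 0" using assms by (simp add: k_def)
  define M where "M = max 1 (1 / tau\<^sup>2)"
  define C0 where "C0 = max 4 (16384 / k ^ 4)"
  have "norm (ff c0 tau d \<omega>) \<le> (M * C0) / (1 + \<omega>\<^sup>2)" for \<omega>
  proof -
    define r where "r = cmod (1 - \<i> * of_real tau * of_real \<omega>)"
    define a where "a = Re (sq tau \<omega>)"
    note F = sq_facts[of tau \<omega>, folded sq_def r_def, folded a_def]
    define y where "y = k * a * (1 - 1 / r)"
    have r1: "r \<ge> 1" using F(1) .
    have y0: "y \<ge> 0" unfolding y_def using k F(6) r1 by (intro mult_nonneg_nonneg) (auto simp: field_simps)
    have nf: "norm (ff c0 tau d \<omega>) = exp (- y)"
      using ff_norm[OF assms(1,2), where \<omega>=\<omega> and d=d] unfolding y_def k_def a_def r_def by simp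
    have ey: "exp (- y) \<le> 1" using y0 by simp
    have claim1: "r\<^sup>2 * exp (- y) \<le> C0"
    proof (cases "r < 2")
      case True
      then have "r * r \<le> 2 * 2" using r1 by (intro mult_mono) auto
      then have "r\<^sup>2 \<le> 4" by (simp add: power2_eq_square)
      then have "r\<^sup>2 * exp (- y) \<le> 4 * 1" using ey by (intro mult_mono) auto
      then show ?thesis by (simp add: C0_def)
    next
      case False
      then have r2: "r \<ge> 2" by simp
      have a2: "a\<^sup>2 \<ge> r / 2" using F(3) by simp
      have a0: "a \<ge> 0" using F(6) .
      have h: "1 - 1 / r \<ge> 1 / 2" using r2 by (simp add: field_simps)
      have ya: "y \<ge> k * a / 2"
      proof -
        have "k * a * (1/2) \<le> k * a * (1 - 1 / r)"
          using h k a0 by (intro mult_left_mono) auto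
        then show ?thesis by (simp add: y_def)
      qed
      have "(k * a / 2) ^ 4 \<le> y ^ 4"
        using ya k a0 by (intro power_mono) auto
      moreover have "(k * a / 2) ^ 4 = k ^ 4 * (a\<^sup>2)\<^sup>2 / 16"
      proof -
        have "(a\<^sup>2)\<^sup>2 = a ^ 4" by (simp flip: power_mult)
        then show ?thesis by (simp add: power_divide power_mult_distrib)
      qed
      moreover have "(a\<^sup>2)\<^sup>2 \<ge> (r / 2)\<^sup>2" using a2 r1 by (intro power_mono) auto
      ultimately have "y ^ 4 \<ge> k ^ 4 * (r / 2)\<^sup>2 / 16"
      proof -
        assume A: "(k * a / 2) ^ 4 \<le> y ^ 4" "(k * a / 2) ^ 4 = k ^ 4 * (a\<^sup>2)\<^sup>2 / 16"
          "(r / 2)\<^sup>2 \<le> (a\<^sup>2)\<^sup>2"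
        have "k ^ 4 * (r / 2)\<^sup>2 \<le> k ^ 4 * (a\<^sup>2)\<^sup>2" using A(3) k by (intro mult_left_mono) auto
        then show ?thesis using A(1,2) by linarith
      qed
      moreover have "(r / 2)\<^sup>2 = r\<^sup>2 / 4" by (simp add: power_divide)
      ultimately have y4: "y ^ 4 \<ge> k ^ 4 * r\<^sup>2 / 64" by simp
      have "(1 + y / 4) ^ 4 \<le> exp (y / 4) ^ 4"
        using y0 by (intro power_mono) (auto simp: exp_ge_add_one_self)
      also have "exp (y / 4) ^ 4 = exp y"
        using exp_of_nat_mult[of 4 "y / 4"] by simp
      finally have e1: "(1 + y / 4) ^ 4 \<le> exp y" .
      have "(y / 4) ^ 4 \<le> (1 + y / 4) ^ 4" using y0 by (intro power_mono) auto
      with e1 have "y ^ 4 / 256 \<le> exp y" by (simp add: power_divide)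
      with y4 have ek: "k ^ 4 * r\<^sup>2 / 16384 \<le> exp y" by simp
      have "r\<^sup>2 * exp (- y) = r\<^sup>2 / exp y" by (simp add: exp_minus field_simps)
      also have "\<dots> \<le> 16384 / k ^ 4"
      proof -
        have "r\<^sup>2 = (16384 / k ^ 4) * (k ^ 4 * r\<^sup>2 / 16384)" using k by simp
        also have "\<dots> \<le> (16384 / k ^ 4) * exp y" using ek k by (intro mult_left_mono) auto
        finally show ?thesis by (simp add: pos_divide_le_eq)
      qed
      finally show ?thesis by (simp add: C0_def)
    qed
    have claim2: "1 + \<omega>\<^sup>2 \<le> M * r\<^sup>2"
    proof -
      have "1 + \<omega>\<^sup>2 = 1 + (1 / tau\<^sup>2) * (tau\<^sup>2 * \<omega>\<^sup>2)" using assms by simp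
      also have "\<dots> \<le> M * 1 + M * (tau\<^sup>2 * \<omega>\<^sup>2)"
        unfolding M_def by (intro add_mono mult_right_mono) auto
      also have "\<dots> = M * r\<^sup>2" using F(2) by (simp add: algebra_simps)
      finally show ?thesis .
    qed
    have M0: "M \<ge> 0" by (simp add: M_def)
    have "(1 + \<omega>\<^sup>2) * exp (- y) \<le> (M * r\<^sup>2) * exp (- y)"
      using claim2 by (intro mult_right_mono) auto
    also have "\<dots> = M * (r\<^sup>2 * exp (- y))" by simp
    also have "\<dots> \<le> M * C0" using claim1 M0 by (intro mult_left_mono) auto
    finally have "(1 + \<omega>\<^sup>2) * exp (- y) \<le> M * C0" .
    then show ?thesis unfolding nf by (simp add: field_simps add_pos_nonneg)
  qed
  then show ?thesis by (rule that)
qed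

lemma ff_cont:
  assumes "c0 > 0" "tau > 0"
  shows "continuous_on UNIV (ff c0 tau d)"
proof (intro continuous_at_imp_continuous_on ballI)
  fix \<omega> :: real
  have z: "1 - \<i> * of_real tau * of_real \<omega> \<notin> \<real>\<^sub>\<le>\<^sub>0"
    by (auto simp: complex_nonpos_Reals_iff)
  then have s0: "csqrt (1 - \<i> * of_real tau * of_real \<omega>) \<noteq> 0"
    by (metis csqrt_eq_0 nonpos_Reals_zero_I)
  show "isCont (ff c0 tau d) \<omega>"
    unfolding ff_def[abs_def] sq_def
    using assms s0 z by (auto intro!: continuous_intros isCont_csqrt')
qed

lemma int_inv_sq: "integrable lborel (\<lambda>x::real. C / (1 + x\<^sup>2))"
proof -
  have "integrable lborel (\<lambda>x::real. inverse (1 + x^2))"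
    using integrable_inverse_1_plus_square by (simp add: set_integrable_def)
  then have "integrable lborel (\<lambda>x::real. C * inverse (1 + x^2))" by simp
  then show ?thesis by (simp add: divide_inverse)
qed

lemma Phi_nonneg: "w > 0 \<Longrightarrow> Phi w \<nu> \<ge> 0"
  by (auto simp: Phi_def intro!: divide_nonneg_pos)

lemma Phi_meas: "Phi w \<in> borel_measurable lborel"
  unfolding Phi_def[abs_def] by measurable

lemma Phi_le_w:
  assumes w: "w > 0"
  shows "Phi w \<nu> \<le> w"
proof -
  have it: "integrable lborel (\<lambda>x. complex_of_real (tri w x))" using tri_int[OF w] by simp
  have "complex_of_real (\<integral>s. tri w s \<partial>lborel) = (\<integral>s. complex_of_real (tri w s) \<partial>lborel)"
    by simp
  also have "\<dots> = complex_of_real (Phi w 0)" using FT_tri[OF w, of 0] by simp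
  finally have itri: "(\<integral>s. tri w s \<partial>lborel) = w" by (simp add: Phi_def)
  have "Phi w \<nu> \<le> norm (complex_of_real (Phi w \<nu>))" by simp
  also have "\<dots> = norm (\<integral>s. complex_of_real (tri w s) * exp (- \<i> * of_real \<nu> * of_real s) \<partial>lborel)"
    using FT_tri[OF w] by simp
  also have "\<dots> \<le> (\<integral>s. norm (complex_of_real (tri w s) * exp (- \<i> * of_real \<nu> * of_real s)) \<partial>lborel)"
    by (rule integral_norm_bound)
  also have "\<dots> = (\<integral>s. tri w s \<partial>lborel)"
    by (simp add: norm_mult tri_nonneg)
  finally show ?thesis using itri by simp
qed

lemma Phi_int: assumes w: "w > 0" shows "integrable lborel (Phi w)"
proof (rule Bochner_Integration.integrable_bound[OF int_inv_sq[of "2 * w + 8 / w"] Phi_meas])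
  show "AE x in lborel. norm (Phi w x) \<le> norm ((2 * w + 8 / w) / (1 + x\<^sup>2))"
  proof (rule AE_I2)
    fix x :: real
    have p: "1 + x\<^sup>2 > 0" by (simp add: add_pos_nonneg)
    have "Phi w x \<le> (2 * w + 8 / w) / (1 + x\<^sup>2)"
    proof (cases "\<bar>x\<bar> \<ge> 1")
      case True
      then have x0: "x \<noteq> 0" by auto
      have x2: "x\<^sup>2 \<ge> 1" using True by (metis abs_le_square_iff abs_one one_power2)
      have "Phi w x = 2 * (1 - cos (x * w)) / (w * x\<^sup>2)" using x0 by (simp add: Phi_def)
      also have "\<dots> \<le> 4 / (w * x\<^sup>2)"
      proof (rule divide_right_mono)
        show "2 * (1 - cos (x * w)) \<le> 4" using cos_ge_minus_one[of "x * w"] by (smt (verit))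
      qed (use w in auto)
      also have "\<dots> = 8 / (w * (2 * x\<^sup>2))" by simp
      also have "\<dots> \<le> 8 / (w * (1 + x\<^sup>2))"
        using w x2 by (intro divide_left_mono mult_left_mono mult_pos_pos) (auto simp: add_pos_nonneg)
      also have "\<dots> = (8 / w) / (1 + x\<^sup>2)" by simp
      also have "\<dots> \<le> (2 * w + 8 / w) / (1 + x\<^sup>2)"
        using w p by (intro divide_right_mono) auto
      finally show ?thesis .
    next
      case False
      then have x2: "x\<^sup>2 \<le> 1" by (simp add: abs_le_square_iff[symmetric] abs_square_le_1)
      have "Phi w x \<le> w" by (rule Phi_le_w[OF w])
      also have "\<dots> = (2 * w) / 2" by simp
      also have "\<dots> \<le> (2 * w) / (1 + x\<^sup>2)"
        using w x2 p by (intro divide_left_mono) auto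
      also have "\<dots> \<le> (2 * w + 8 / w) / (1 + x\<^sup>2)"
        using w p by (intro divide_right_mono) auto
      finally show ?thesis .
    qed
    then show "norm (Phi w x) \<le> norm ((2 * w + 8 / w) / (1 + x\<^sup>2))"
      using Phi_nonneg[OF w, of x] w p by simp
  qed
qed

lemma Phi_pos_int: assumes w: "w > 0" shows "(\<integral>\<nu>. Phi w \<nu> \<partial>lborel) > 0"
proof -
  have ge: "(\<integral>\<nu>. Phi w \<nu> \<partial>lborel) \<ge> 0"
    using Phi_nonneg[OF w] by (simp add: Bochner_Integration.integral_nonneg)
  have "(\<integral>\<nu>. Phi w \<nu> \<partial>lborel) \<noteq> 0"
  proof
    assume "(\<integral>\<nu>. Phi w \<nu> \<partial>lborel) = 0"
    then have "AE x in lborel. Phi w x = 0"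
      using integral_nonneg_eq_0_iff_AE[OF Phi_int[OF w]] Phi_nonneg[OF w] by auto
    then obtain N where N: "{x \<in> space lborel. \<not> Phi w x = 0} \<subseteq> N" "emeasure lborel N = 0"
      "N \<in> sets lborel"
      by (auto elim!: AE_E)
    have sub: "{0<..<pi / w} \<subseteq> N"
    proof
      fix x assume x: "x \<in> {0<..<pi / w}"
      then have "0 < x * w" "x * w < pi" using w by (auto simp: field_simps)
      then have "cos (x * w) < cos 0" by (intro cos_monotone_0_pi) auto
      then have "Phi w x > 0" using x w by (auto simp: Phi_def intro!: divide_pos_pos)
      then show "x \<in> N" using N(1) by auto
    qed
    have "emeasure lborel {0<..<pi / w} \<le> emeasure lborel N"
      by (rule emeasure_mono[OF sub N(3)])
    moreover have "emeasure lborel {0<..<pi / w} = ennreal (pi / w)" using w by simp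
    ultimately show False using N(2) w by simp
  qed
  with ge show ?thesis by simp
qed

lemma Phi_scale: "d > 0 \<Longrightarrow> w > 0 \<Longrightarrow> Phi (d * w) (\<nu> / d) = d * Phi w \<nu>"
  by (auto simp: Phi_def field_simps power2_eq_square)

lemma ff_lim:
  assumes "c0 > 0" "tau > 0"
  shows "(\<lambda>n. ff c0 tau (1 / Suc n) (\<nu> / (1 / Suc n))) \<longlonglongrightarrow> 1"
proof (cases "\<nu> = 0")
  case True
  then show ?thesis by (simp add: ff_def)
next
  case False
  define N where "N n = real (Suc n)" for n
  have N0: "N n > 0" for n by (simp add: N_def)
  define A where "A n = \<i> * of_real \<nu> / (of_real c0 * sq tau (\<nu> * N n))" for n
  have eqA: "ff c0 tau (1 / Suc n) (\<nu> / (1 / Suc n)) = exp (A n)" for n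
  proof -
    have "\<nu> / (1 / real (Suc n)) = \<nu> * N n" by (simp add: N_def)
    moreover have "complex_of_real (\<nu> * N n) * complex_of_real (1 / real (Suc n)) = of_real \<nu>"
    proof -
      have "\<nu> * N n * (1 / real (Suc n)) = \<nu>" by (simp add: N_def)
      then show ?thesis by (simp only: of_real_mult[symmetric])
    qed
    ultimately show ?thesis unfolding ff_def A_def by (simp only: mult.assoc)
  qed
  define B where "B = \<bar>\<nu>\<bar> / (c0 * sqrt (tau * \<bar>\<nu>\<bar>))"
  have tB: "tau * \<bar>\<nu>\<bar> > 0" using assms False by simp
  have bound: "norm (A n) \<le> B * inverse (sqrt (N n))" for n
  proof -
    define z where "z = 1 - \<i> * of_real tau * of_real (\<nu> * N n)"
    have "tau * \<bar>\<nu>\<bar> * N n = \<bar>Im z\<bar>" using assms N0[of n] by (simp add: z_def abs_mult)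
    also have "\<dots> \<le> cmod z" by (rule abs_Im_le_cmod)
    finally have rz: "tau * \<bar>\<nu>\<bar> * N n \<le> cmod z" .
    have ns: "norm (sq tau (\<nu> * N n)) = sqrt (cmod z)" by (simp add: sq_def z_def)
    have "sqrt (tau * \<bar>\<nu>\<bar>) * sqrt (N n) \<le> sqrt (cmod z)"
      using rz by (simp add: real_sqrt_mult[symmetric])
    moreover have pos: "sqrt (tau * \<bar>\<nu>\<bar>) * sqrt (N n) > 0" using tB N0[of n] by simp
    ultimately have zpos: "sqrt (cmod z) > 0" by linarith
    have le: "sqrt (tau * \<bar>\<nu>\<bar>) * sqrt (N n) \<le> sqrt (cmod z)"
      using rz by (simp add: real_sqrt_mult[symmetric])
    have c0p: "c0 > 0" using assms by simp
    have "\<bar>\<nu>\<bar> / (c0 * sqrt (cmod z)) \<le> \<bar>\<nu>\<bar> / (c0 * (sqrt (tau * \<bar>\<nu>\<bar>) * sqrt (N n)))"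
      by (rule divide_left_mono[OF mult_left_mono[OF le] abs_ge_zero
            mult_pos_pos[OF mult_pos_pos[OF c0p zpos] mult_pos_pos[OF c0p pos]]]) (use c0p in simp)
    also have "\<dots> = B * inverse (sqrt (N n))"
      by (simp add: B_def divide_inverse inverse_mult_distrib mult_ac)
    finally show ?thesis
      unfolding A_def norm_divide norm_mult ns using c0p by simp
  qed
  have lim_sqrt: "filterlim (\<lambda>n. sqrt (N n)) at_top sequentially"
    unfolding N_def
    by (rule filterlim_compose[OF sqrt_at_top filterlim_compose[OF filterlim_real_sequentially filterlim_Suc]])
  have lim0: "(\<lambda>n. B * inverse (sqrt (N n))) \<longlonglongrightarrow> 0"
    using tendsto_mult_right_zero[OF tendsto_inverse_0_at_top[OF lim_sqrt], of B] .
  have ev: "eventually (\<lambda>n. norm (A n) \<le> B * inverse (sqrt (N n))) sequentially"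
    by (rule always_eventually) (use bound in blast)
  have "A \<longlonglongrightarrow> 0" by (rule Lim_null_comparison[OF ev lim0])
  then have "(\<lambda>n. exp (A n)) \<longlonglongrightarrow> exp 0" by (rule tendsto_exp)
  moreover have "(\<lambda>n. ff c0 tau (1 / Suc n) (\<nu> / (1 / Suc n))) = (\<lambda>n. exp (A n))"
    by (rule ext, rule eqA)
  ultimately show ?thesis by simp
qed

lemma J0:
  assumes c0: "c0 > 0" and tau: "tau > 0" and C: "causal (kernel_tv c0 tau)" and d: "d > 0"
  shows "(\<integral>\<nu>. ff c0 tau d (\<nu> / d) * of_real (Phi (1/c0) \<nu>) \<partial>lborel) = 0"
proof -
  obtain x :: "real^3" where nx: "norm x = d" using vector_choose_size[of d] d by auto
  define g where "g \<omega> = exp (- alpha_tv c0 tau \<omega> * of_real d)" for \<omega>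
  have H: "(\<integral>\<omega>. exp (- \<i> * of_real \<omega> * of_real t) * g \<omega> \<partial>lborel) = 0" if "t < 0" for t
    using C[unfolded causal_def, rule_format, OF that, of x]
    unfolding kernel_tv_def inv_fourier_def g_def nx by simp
  define w where "w = d * (1/c0)"
  have w: "w > 0" using d c0 by (simp add: w_def)
  define \<psi> where "\<psi> t = tri w (t + w)" for t
  have g_eq: "g \<omega> = ff c0 tau d \<omega> * exp (- \<i> * of_real \<omega> * of_real w)" for \<omega>
    using alg[of c0 tau \<omega> d] c0 by (simp add: g_def w_def)
  obtain K where K: "\<And>\<omega>. norm (ff c0 tau d \<omega>) \<le> K / (1 + \<omega>\<^sup>2)"
    using ff_decay[OF c0 tau d] by blast
  have ffm: "ff c0 tau d \<in> borel_measurable borel"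
    using borel_measurable_continuous_onI[OF ff_cont[OF c0 tau]] .
  have gm: "g \<in> borel_measurable borel"
    unfolding g_eq[abs_def] using ffm by measurable
  have normg: "norm (g \<omega>) = norm (ff c0 tau d \<omega>)" for \<omega>
    unfolding g_eq norm_mult by simp
  have int_g: "integrable lborel g"
  proof (rule Bochner_Integration.integrable_bound[OF int_inv_sq[of K]])
    show "g \<in> borel_measurable lborel" using gm by (simp add: measurable_lborel1)
    show "AE x in lborel. norm (g x) \<le> norm (K / (1 + x\<^sup>2))"
    proof (rule AE_I2)
      fix x :: real
      have "K / (1 + x\<^sup>2) \<le> \<bar>K\<bar> / (1 + x\<^sup>2)"
        by (intro divide_right_mono) (auto simp: add_pos_nonneg)
      then show "norm (g x) \<le> norm (K / (1 + x\<^sup>2))"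
        using K[of x] normg[of x] by (simp add: abs_of_pos add_pos_nonneg)
    qed
  qed
  have psim: "\<psi> \<in> borel_measurable borel" unfolding \<psi>_def tri_def by measurable
  have int_psi: "integrable lborel \<psi>"
    using lborel_integrable_real_affine[OF tri_int[OF w], of 1 w] by (simp add: \<psi>_def[abs_def] add.commute)
  have psi0: "\<psi> t = 0" if "t \<ge> 0" for t
    using that w by (simp add: \<psi>_def tri_def)
  have FTpsi: "(\<integral>t. of_real (\<psi> t) * exp (- \<i> * of_real \<omega> * of_real t) \<partial>lborel) =
      exp (\<i> * of_real \<omega> * of_real w) * of_real (Phi w \<omega>)" for \<omega>
  proof -
    define F where "F s = complex_of_real (tri w s) * exp (- \<i> * of_real \<omega> * of_real s) *
        exp (\<i> * of_real \<omega> * of_real w)" for s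
    have "(\<integral>s. F s \<partial>lborel) = \<bar>1\<bar> *\<^sub>R (\<integral>x. F (w + 1 * x) \<partial>lborel)"
      by (rule lborel_integral_real_affine) simp
    also have "(\<lambda>x. F (w + 1 * x)) = (\<lambda>t. of_real (\<psi> t) * exp (- \<i> * of_real \<omega> * of_real t))"
    proof
      fix t
      have "exp (- \<i> * of_real \<omega> * of_real (w + t)) * exp (\<i> * of_real \<omega> * of_real w) =
            exp (- \<i> * of_real \<omega> * of_real t)"
        by (simp add: exp_add[symmetric] algebra_simps)
      then show "F (w + 1 * t) = of_real (\<psi> t) * exp (- \<i> * of_real \<omega> * of_real t)"
        unfolding F_def \<psi>_def by (simp add: add.commute mult.assoc)
    qed
    finally have "(\<integral>t. of_real (\<psi> t) * exp (- \<i> * of_real \<omega> * of_real t) \<partial>lborel) =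
        (\<integral>s. F s \<partial>lborel)" by simp
    also have "\<dots> = (\<integral>s. complex_of_real (tri w s) * exp (- \<i> * of_real \<omega> * of_real s) \<partial>lborel) *
        exp (\<i> * of_real \<omega> * of_real w)"
      unfolding F_def by (rule integral_mult_left_zero)
    also have "\<dots> = exp (\<i> * of_real \<omega> * of_real w) * of_real (Phi w \<omega>)"
      using FT_tri[OF w] by simp
    finally show ?thesis .
  qed
  define P where "P t \<omega> = of_real (\<psi> t) * (exp (- \<i> * of_real \<omega> * of_real t) * g \<omega>)" for t \<omega>
  have psf: "pair_sigma_finite lborel lborel"
    by (simp add: pair_sigma_finite_def lborel.sigma_finite_measure_axioms)
  have psim'[measurable]: "\<psi> \<in> borel_measurable lborel" using psim by (simp add: measurable_lborel1)
  have gm'[measurable]: "g \<in> borel_measurable lborel" using gm by (simp add: measurable_lborel1)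
  have normP: "norm (P t \<omega>) = \<psi> t * norm (g \<omega>)" for t \<omega>
    unfolding P_def using tri_nonneg[of w] by (simp add: norm_mult \<psi>_def)
  have intP: "integrable (lborel \<Otimes>\<^sub>M lborel) (case_prod P)"
  proof (rule pair_sigma_finite.Fubini_integrable[OF psf])
    show "case_prod P \<in> borel_measurable (lborel \<Otimes>\<^sub>M lborel)"
      unfolding P_def by measurable
    have "(\<lambda>t. \<integral>\<omega>. norm (case_prod P (t, \<omega>)) \<partial>lborel) = (\<lambda>t. \<psi> t * (\<integral>\<omega>. norm (g \<omega>) \<partial>lborel))"
      by (simp add: normP)
    then show "integrable lborel (\<lambda>t. \<integral>\<omega>. norm (case_prod P (t, \<omega>)) \<partial>lborel)"
      using int_psi by simp
    show "AE t in lborel. integrable lborel (\<lambda>\<omega>. case_prod P (t, \<omega>))"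
    proof (rule AE_I2)
      fix t
      show "integrable lborel (\<lambda>\<omega>. case_prod P (t, \<omega>))"
      proof (rule Bochner_Integration.integrable_bound[OF integrable_mult_right[OF integrable_norm[OF int_g], of "\<psi> t"]])
        have "(\<lambda>\<omega>. P t \<omega>) \<in> borel_measurable lborel" unfolding P_def by measurable
        then show "(\<lambda>\<omega>. case_prod P (t, \<omega>)) \<in> borel_measurable lborel" by simp
        show "AE x in lborel. norm (case_prod P (t, x)) \<le> norm (\<psi> t * norm (g x))"
          by (intro AE_I2) (simp add: normP)
      qed
    qed
  qed
  have "(\<integral>\<omega>. (\<integral>t. P t \<omega> \<partial>lborel) \<partial>lborel) = (\<integral>t. (\<integral>\<omega>. P t \<omega> \<partial>lborel) \<partial>lborel)"
    by (rule pair_sigma_finite.Fubini_integral[OF psf intP])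
  also have "\<dots> = (\<integral>t. 0 \<partial>lborel)"
  proof -
    have "(\<integral>\<omega>. P t \<omega> \<partial>lborel) = 0" for t
    proof (cases "t < 0")
      case True
      then show ?thesis unfolding P_def using H[OF True] by simp
    next
      case False
      then show ?thesis unfolding P_def using psi0[of t] by simp
    qed
    then show ?thesis by simp
  qed
  finally have Z: "(\<integral>\<omega>. (\<integral>t. P t \<omega> \<partial>lborel) \<partial>lborel) = 0" by simp
  have "(\<integral>t. P t \<omega> \<partial>lborel) = ff c0 tau d \<omega> * of_real (Phi w \<omega>)" for \<omega>
  proof -
    have "(\<integral>t. P t \<omega> \<partial>lborel) = (\<integral>t. of_real (\<psi> t) * exp (- \<i> * of_real \<omega> * of_real t) \<partial>lborel) * g \<omega>"
      unfolding P_def by (subst mult.assoc[symmetric]) (rule integral_mult_left_zero)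
    also have "\<dots> = ff c0 tau d \<omega> * of_real (Phi w \<omega>)"
      unfolding FTpsi g_eq
      by (simp add: mult_ac exp_add[symmetric])
    finally show ?thesis .
  qed
  with Z have Z2: "(\<integral>\<omega>. ff c0 tau d \<omega> * of_real (Phi w \<omega>) \<partial>lborel) = 0" by simp
  have "(\<integral>\<omega>. ff c0 tau d \<omega> * of_real (Phi w \<omega>) \<partial>lborel) =
        \<bar>1/d\<bar> *\<^sub>R (\<integral>\<nu>. ff c0 tau d (0 + (1/d) * \<nu>) * of_real (Phi w (0 + (1/d) * \<nu>)) \<partial>lborel)"
    by (rule lborel_integral_real_affine) (use d in simp)
  also have "(\<lambda>\<nu>. ff c0 tau d (0 + (1/d) * \<nu>) * of_real (Phi w (0 + (1/d) * \<nu>))) =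
             (\<lambda>\<nu>. of_real d * (ff c0 tau d (\<nu> / d) * of_real (Phi (1/c0) \<nu>)))"
  proof
    fix \<nu>
    have "Phi w (\<nu> / d) = d * Phi (1/c0) \<nu>"
      unfolding w_def by (rule Phi_scale) (use d c0 in auto)
    then show "ff c0 tau d (0 + (1/d) * \<nu>) * of_real (Phi w (0 + (1/d) * \<nu>)) =
             of_real d * (ff c0 tau d (\<nu> / d) * of_real (Phi (1/c0) \<nu>))"
      by simp
  qed
  finally show ?thesis using Z2 d by simp
qed

theorem theorem5:
  fixes c0 tau :: real
  assumes "c0 > 0" and "tau > 0"
  shows "\<not> causal (kernel_tv c0 tau)"
proof
  assume C: "causal (kernel_tv c0 tau)"
  define a where "a = 1 / c0"
  have a: "a > 0" using assms by (simp add: a_def)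
  define dd where "dd n = 1 / real (Suc n)" for n
  have dd: "dd n > 0" for n by (simp add: dd_def)
  define S where "S n \<nu> = ff c0 tau (dd n) (\<nu> / dd n) * of_real (Phi a \<nu>)" for n \<nu>
  have "(\<lambda>n. integral\<^sup>L lborel (S n)) \<longlonglongrightarrow> integral\<^sup>L lborel (\<lambda>\<nu>. complex_of_real (Phi a \<nu>))"
  proof (rule integral_dominated_convergence[where w = "Phi a"])
    show "(\<lambda>\<nu>. complex_of_real (Phi a \<nu>)) \<in> borel_measurable lborel"
      using Phi_int[OF a] by measurable
    show "S n \<in> borel_measurable lborel" for n
    proof -
      have "continuous_on UNIV (\<lambda>\<nu>. ff c0 tau (dd n) (\<nu> / dd n))"
        by (rule continuous_on_compose2[OF ff_cont[OF assms]]) (use dd[of n] in \<open>auto intro!: continuous_intros\<close>)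
      then have "(\<lambda>\<nu>. ff c0 tau (dd n) (\<nu> / dd n)) \<in> borel_measurable lborel"
        using borel_measurable_continuous_onI by (simp add: measurable_lborel1)
      then show ?thesis using Phi_int[OF a] unfolding S_def by measurable
    qed
    show "integrable lborel (Phi a)" by (rule Phi_int[OF a])
    show "AE \<nu> in lborel. (\<lambda>n. S n \<nu>) \<longlonglongrightarrow> complex_of_real (Phi a \<nu>)"
    proof (rule AE_I2)
      fix \<nu>
      show "(\<lambda>n. S n \<nu>) \<longlonglongrightarrow> complex_of_real (Phi a \<nu>)"
        using tendsto_mult[OF ff_lim[OF assms, of \<nu>] tendsto_const[of "complex_of_real (Phi a \<nu>)"]]
        unfolding S_def dd_def by simp
    qed
    show "AE \<nu> in lborel. norm (S n \<nu>) \<le> Phi a \<nu>" for n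
      using ff_le1[OF assms, of "dd n"] dd[of n] Phi_nonneg[OF a]
      by (auto simp: S_def norm_mult intro!: mult_left_le_one_le)
  qed
  moreover have "integral\<^sup>L lborel (S n) = 0" for n
    using J0[OF assms C dd[of n]] unfolding S_def a_def by simp
  ultimately have "integral\<^sup>L lborel (\<lambda>\<nu>. complex_of_real (Phi a \<nu>)) = 0"
    by (simp add: LIMSEQ_const_iff)
  then have "complex_of_real (\<integral>\<nu>. Phi a \<nu> \<partial>lborel) = 0" by simp
  then show False using Phi_pos_int[OF a] by simp
qed

end
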